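(* Let $a$ be a fixed positive integer. For any positive integers $k,n$ with $k\ge n$, $$S_t(N_{k,n})=\sum_{i=1}^n\binom{k-i}{k-n}t^{n-i}N_{k,i}.$$
   Context: $\mathfrak{h}_t=\mathbb{Q}[t]\langle x,y\rangle$, $z_k=x^{k-1}y$. For $k\ge n\ge1$, $N_{k,n}=\sum_{k_1+\cdots+k_n=k,\ k_i\ge1}z_{ak_1}\cdots z_{ak_n}$. $\sigma_t$ is the algebra automorphism of $\mathfrak{h}_t$ with $\sigma_t(x)=x,\sigma_t(y)=tx+y$, and $S_t$ is the $\mathbb{Q}[t]$-linear map with $S_t(1)=1$, $S_t(wa)=\sigma_t(w)a$ for words $w$ and letters $a\in\{x,y\}$. *)

theory Defs
  imports "HOL-Library.Poly_Mapping" "HOL-Computational_Algebra.Polynomial"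
begin

text \<open>The free algebra h_t = Q[t]<x,y>: finitely supported maps from words over {x,y}
  to Q[t], with concatenation (convolution) product.\<close>

datatype letter = X | Y

type_synonym ht = "letter list \<Rightarrow>\<^sub>0 rat poly"

definition word :: "letter list \<Rightarrow> ht" where
  "word w = Poly_Mapping.single w 1"

definition hmul :: "ht \<Rightarrow> ht \<Rightarrow> ht" where
  "hmul f g = (\<Sum>u\<in>Poly_Mapping.keys f. \<Sum>v\<in>Poly_Mapping.keys g.
      Poly_Mapping.single (u @ v) (Poly_Mapping.lookup f u * Poly_Mapping.lookup g v))"

definition hscale :: "rat poly \<Rightarrow> ht \<Rightarrow> ht" where
  "hscale c f = hmul (Poly_Mapping.single [] c) f"

definition tvar :: "rat poly" where "tvar = [:0, 1:]"

definition z :: "nat \<Rightarrow> ht" where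
  "z k = word (replicate (k - 1) X @ [Y])"

fun sigma_letter :: "letter \<Rightarrow> ht" where
  "sigma_letter X = word [X]"
| "sigma_letter Y = hscale tvar (word [X]) + word [Y]"

definition sigma_word :: "letter list \<Rightarrow> ht" where
  "sigma_word w = foldr (\<lambda>l acc. hmul (sigma_letter l) acc) w (word [])"

definition sigma :: "ht \<Rightarrow> ht" where
  "sigma f = (\<Sum>w\<in>Poly_Mapping.keys f. hscale (Poly_Mapping.lookup f w) (sigma_word w))"

definition S_word :: "letter list \<Rightarrow> ht" where
  "S_word w = (if w = [] then word []
               else hmul (sigma (word (butlast w))) (word [last w]))"

definition S :: "ht \<Rightarrow> ht" where
  "S f = (\<Sum>w\<in>Poly_Mapping.keys f. hscale (Poly_Mapping.lookup f w) (S_word w))"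

definition N :: "nat \<Rightarrow> nat \<Rightarrow> nat \<Rightarrow> ht" where
  "N a k n = (\<Sum>c\<in>{c :: nat list. length c = n \<and> (\<forall>i\<in>set c. 1 \<le> i) \<and> sum_list c = k}.
      foldr (\<lambda>ki acc. hmul (z (a * ki)) acc) c (word []))"

end

theory Submission
  imports Defs
begin


instantiation list :: (type) monoid_add
begin
definition zero_list :: "'a list" where "zero_list = []"
definition plus_list :: "'a list \<Rightarrow> 'a list \<Rightarrow> 'a list" where "plus_list u v = u @ v"
instance by standard (auto simp: zero_list_def plus_list_def)
end

lemma plus_list_app[simp]: "(u::'a list) + v = u @ v" by (simp add: plus_list_def)
lemma zero_list_nil[simp]: "(0::'a list) = []" by (simp add: zero_list_def)

lemma pm_decomp: "(f::'a \<Rightarrow>\<^sub>0 'b::comm_monoid_add) = (\<Sum>u\<in>Poly_Mapping.keys f. Poly_Mapping.single u (Poly_Mapping.lookup f u))"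
  by (rule poly_mapping_eqI) (auto simp: lookup_sum lookup_single when_def in_keys_iff sum.delta' split: if_splits)

lemma hmul_eq: "hmul f g = f * g"
proof -
  have "f * g = (\<Sum>u\<in>Poly_Mapping.keys f. Poly_Mapping.single u (Poly_Mapping.lookup f u)) * (\<Sum>v\<in>Poly_Mapping.keys g. Poly_Mapping.single v (Poly_Mapping.lookup g v))"
    using pm_decomp[of f] pm_decomp[of g] by simp
  also have "\<dots> = hmul f g"
    by (simp add: hmul_def sum_distrib_left sum_distrib_right mult_single sum.swap[of _ "Poly_Mapping.keys g"])
  finally show ?thesis ..
qed


abbreviation Cs :: "rat poly \<Rightarrow> ht" where "Cs c \<equiv> Poly_Mapping.single [] c"

lemma hscale_eq: "hscale c f = Cs c * f" by (simp add: hscale_def hmul_eq)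
lemma word_one: "word [] = 1" unfolding word_def by (metis single_one zero_list_nil)
lemma word_mult: "word u * word v = word (u @ v)" by (simp add: word_def mult_single)
lemma Cs_mult: "Cs c * Cs d = Cs (c * d)" by (simp add: mult_single)
lemma Cs_one: "Cs 1 = 1" by (metis single_one zero_list_nil)
lemma Cs_single: "Cs c * Poly_Mapping.single u d = Poly_Mapping.single u (c * d)" by (simp add: mult_single)
lemma single_Cs: "Poly_Mapping.single u d * Cs c = Poly_Mapping.single u (c * d)" by (simp add: mult_single mult.commute)

lemma Cs_comm: "Cs c * f = f * Cs c"
proof -
  have "Cs c * f = Cs c * (\<Sum>u\<in>Poly_Mapping.keys f. Poly_Mapping.single u (Poly_Mapping.lookup f u))"
    using pm_decomp[of f] by simp
  also have "\<dots> = (\<Sum>u\<in>Poly_Mapping.keys f. Poly_Mapping.single u (Poly_Mapping.lookup f u)) * Cs c"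
    by (simp add: sum_distrib_left sum_distrib_right Cs_single single_Cs)
  finally show ?thesis using pm_decomp[of f] by simp
qed

lemma Cs_left_comm: "f * (Cs c * g) = Cs c * (f * g)"
  by (metis Cs_comm mult.assoc)

definition Lin :: "(letter list \<Rightarrow> ht) \<Rightarrow> ht \<Rightarrow> ht" where
  "Lin F f = (\<Sum>w\<in>Poly_Mapping.keys f. Cs (Poly_Mapping.lookup f w) * F w)"

lemma sigma_Lin: "sigma = Lin sigma_word" by (rule ext) (simp add: sigma_def Lin_def hscale_eq)
lemma S_Lin: "S = Lin S_word" by (rule ext) (simp add: S_def Lin_def hscale_eq)

lemma Lin_superset:
  assumes "finite A" "Poly_Mapping.keys f \<subseteq> A"
  shows "Lin F f = (\<Sum>w\<in>A. Cs (Poly_Mapping.lookup f w) * F w)"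
  unfolding Lin_def
  by (rule sum.mono_neutral_left) (use assms in \<open>auto simp: in_keys_iff\<close>)

lemma Lin_add: "Lin F (f + g) = Lin F f + Lin F g"
proof -
  let ?A = "Poly_Mapping.keys f \<union> Poly_Mapping.keys g"
  have "Lin F (f + g) = (\<Sum>w\<in>?A. Cs (Poly_Mapping.lookup (f+g) w) * F w)"
    by (rule Lin_superset) (auto dest: keys_add[THEN subsetD])
  also have "\<dots> = (\<Sum>w\<in>?A. Cs (Poly_Mapping.lookup f w) * F w) + (\<Sum>w\<in>?A. Cs (Poly_Mapping.lookup g w) * F w)"
    by (simp add: lookup_add single_add distrib_right sum.distrib)
  also have "\<dots> = Lin F f + Lin F g"
    using Lin_superset[of ?A f F] Lin_superset[of ?A g F] by simp
  finally show ?thesis .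
qed

lemma Lin_0: "Lin F 0 = 0" by (simp add: Lin_def)

lemma Lin_sum: "Lin F (\<Sum>i\<in>I. f i) = (\<Sum>i\<in>I. Lin F (f i))"
  by (induction I rule: infinite_finite_induct) (auto simp: Lin_0 Lin_add)

lemma Lin_single: "Lin F (Poly_Mapping.single u c) = Cs c * F u"
  by (simp add: Lin_def)

lemma Lin_word: "Lin F (word u) = F u"
  by (simp add: word_def Lin_single Cs_one)

lemma sigma_word_nil: "sigma_word [] = 1" by (simp add: sigma_word_def word_one)
lemma sigma_word_cons: "sigma_word (l # u) = sigma_letter l * sigma_word u"
  by (simp add: sigma_word_def hmul_eq)
lemma sigma_word_app: "sigma_word (u @ v) = sigma_word u * sigma_word v"
  by (induction u) (simp_all add: sigma_word_nil sigma_word_cons mult.assoc)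

lemma sigma_word_repX: "sigma_word (replicate m X) = word (replicate m X)"
  by (induction m) (simp_all add: sigma_word_nil sigma_word_cons word_one word_mult)

lemma S_word_app: "v \<noteq> [] \<Longrightarrow> S_word (u @ v) = sigma_word u * S_word v"
  by (simp add: S_word_def butlast_append sigma_Lin Lin_word sigma_word_app hmul_eq mult.assoc)

lemma S_word: "S (word w) = S_word w" by (simp add: S_Lin Lin_word)

lemma S_z: "S (z m) = z m"
  by (simp add: z_def S_word S_word_def sigma_Lin Lin_word sigma_word_repX hmul_eq word_mult)




definition Comp :: "nat \<Rightarrow> nat \<Rightarrow> nat list set" where
  "Comp k n = {c :: nat list. length c = n \<and> (\<forall>i\<in>set c. 1 \<le> i) \<and> sum_list c = k}"

definition W :: "nat \<Rightarrow> nat list \<Rightarrow> letter list" where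
  "W a c = concat (map (\<lambda>j. replicate (a * j - 1) X @ [Y]) c)"

lemma foldr_W: "foldr (\<lambda>ki acc. hmul (z (a * ki)) acc) c (word []) = word (W a c)"
  by (induction c) (simp_all add: W_def hmul_eq z_def word_mult)

lemma N_words: "N a k n = (\<Sum>c\<in>Comp k n. word (W a c))"
  by (simp add: N_def Comp_def foldr_W)

lemma W_nonempty: "c \<noteq> [] \<Longrightarrow> W a c \<noteq> []"
  by (cases c) (simp_all add: W_def)

lemma len_le_sum: "(\<forall>i\<in>set c. 1 \<le> (i::nat)) \<Longrightarrow> length c \<le> sum_list c"
  by (induction c) auto

lemma finite_Comp: "finite (Comp k n)"
proof -
  have "Comp k n \<subseteq> {c. set c \<subseteq> {0..k} \<and> length c = n}"
    by (auto simp: Comp_def member_le_sum_list)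
  moreover have "finite {c. set c \<subseteq> {0..k} \<and> length c = n}"
    by (rule finite_lists_length_eq) simp
  ultimately show ?thesis by (rule finite_subset)
qed

lemma Comp_empty: "k < n \<Longrightarrow> Comp k n = {}"
  using len_le_sum by (fastforce simp: Comp_def)

lemma N_small: "k < n \<Longrightarrow> N a k n = 0"
  by (simp add: N_words Comp_empty)

lemma N_zero: "N a k 0 = (if k = 0 then 1 else 0)"
proof -
  have "Comp k 0 = (if k = 0 then {[]} else {})" by (auto simp: Comp_def)
  then show ?thesis by (simp add: N_words W_def word_one)
qed

lemma N_one: "1 \<le> k \<Longrightarrow> N a k 1 = z (a * k)"
proof -
  assume k: "1 \<le> k"
  have "Comp k 1 = {[k]}" using k by (auto simp: Comp_def length_Suc_conv)
  then show ?thesis by (simp add: N_words W_def z_def)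
qed

lemma S_left:
  assumes "1 \<le> n"
  shows "S (word u * N a k n) = sigma_word u * S (N a k n)"
proof -
  have ne: "c \<in> Comp k n \<Longrightarrow> W a c \<noteq> []" for c
    using assms by (intro W_nonempty) (auto simp: Comp_def)
  have "S (word u * N a k n) = (\<Sum>c\<in>Comp k n. S_word (u @ W a c))"
    by (simp add: N_words sum_distrib_left word_mult S_Lin Lin_sum Lin_word)
  also have "\<dots> = (\<Sum>c\<in>Comp k n. sigma_word u * S_word (W a c))"
    by (rule sum.cong) (simp_all add: S_word_app ne)
  also have "\<dots> = sigma_word u * S (N a k n)"
    by (simp add: N_words sum_distrib_left S_Lin Lin_sum Lin_word)
  finally show ?thesis .
qed

definition Xa :: "nat \<Rightarrow> ht" where "Xa a = word (replicate a X)"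

lemma sigma_z:
  assumes "1 \<le> a"
  shows "sigma_word (replicate (a - 1) X @ [Y]) = Cs tvar * Xa a + z a"
proof -
  have r: "replicate (a - Suc 0) X @ [X] = replicate a X"
    using assms by (cases a) (simp_all add: replicate_append_same)
  have "sigma_word (replicate (a - 1) X @ [Y]) = word (replicate (a - 1) X) * (Cs tvar * word [X] + word [Y])"
    by (simp add: sigma_word_app sigma_word_repX sigma_word_cons sigma_word_nil hscale_eq)
  also have "\<dots> = Cs tvar * Xa a + z a"
    by (simp add: distrib_left Cs_left_comm word_mult r Xa_def z_def)
  finally show ?thesis .
qed

lemma N_rec:
  assumes a: "1 \<le> a"
  shows "N a (Suc k) (Suc n) = z a * N a k n + Xa a * N a k (Suc n)"
proof -
  let ?g = "\<lambda>c. Suc (hd c) # tl c"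
  have set_eq: "Comp (Suc k) (Suc n) = Cons 1 ` Comp k n \<union> ?g ` Comp k (Suc n)"
  proof (rule set_eqI, rule iffI)
    fix c assume "c \<in> Comp (Suc k) (Suc n)"
    then obtain h r where c: "c = h # r" and hr: "length r = n" "1 \<le> h" "\<forall>i\<in>set r. 1 \<le> i" "h + sum_list r = Suc k"
      by (auto simp: Comp_def length_Suc_conv)
    show "c \<in> Cons 1 ` Comp k n \<union> ?g ` Comp k (Suc n)"
    proof (cases "h = 1")
      case True
      then show ?thesis using c hr by (auto simp: Comp_def)
    next
      case False
      then have "(h - 1) # r \<in> Comp k (Suc n)" using hr by (auto simp: Comp_def)
      moreover have "c = ?g ((h - 1) # r)" using c False hr by auto
      ultimately show ?thesis by blast
    qed
  next
    fix c assume "c \<in> Cons 1 ` Comp k n \<union> ?g ` Comp k (Suc n)"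
    then show "c \<in> Comp (Suc k) (Suc n)"
    proof
      assume "c \<in> Cons 1 ` Comp k n" then show ?thesis by (auto simp: Comp_def)
    next
      assume "c \<in> ?g ` Comp k (Suc n)"
      then obtain d where d: "d \<in> Comp k (Suc n)" "c = ?g d" by blast
      then obtain h r where "d = h # r" by (cases d) (auto simp: Comp_def)
      then show ?thesis using d by (auto simp: Comp_def)
    qed
  qed
  have disj: "Cons 1 ` Comp k n \<inter> ?g ` Comp k (Suc n) = {}"
  proof -
    { fix d assume "d \<in> Comp k (Suc n)"
      then obtain h r where "d = h # r" "1 \<le> h" by (cases d) (auto simp: Comp_def)
      then have "hd (?g d) \<noteq> 1" by simp }
    then show ?thesis by force
  qed
  have inj: "inj_on ?g (Comp k (Suc n))"
  proof (rule inj_onI)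
    fix c d assume "c \<in> Comp k (Suc n)" "d \<in> Comp k (Suc n)" "?g c = ?g d"
    then show "c = d" by (cases c; cases d) (auto simp: Comp_def)
  qed
  have Wg: "word (W a (?g d)) = Xa a * word (W a d)" if dC: "d \<in> Comp k (Suc n)" for d
  proof -
    obtain h r where d: "d = h # r" "1 \<le> h" by (cases d) (use dC in \<open>auto simp: Comp_def\<close>)
    have "a * Suc h - 1 = a + (a * h - 1)" using a d(2)
      by (simp add: Suc_le_eq)
    then have "replicate (a * Suc h - 1) X = replicate a X @ replicate (a * h - 1) X"
      by (simp add: replicate_add)
    then show ?thesis using d by (simp add: W_def Xa_def word_mult)
  qed
  have W1: "word (W a (Suc 0 # d)) = z a * word (W a d)" for d
    by (simp add: W_def z_def word_mult)
  have "N a (Suc k) (Suc n) = (\<Sum>c\<in>Cons 1 ` Comp k n. word (W a c)) + (\<Sum>c\<in>?g ` Comp k (Suc n). word (W a c))"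
    unfolding N_words set_eq by (rule sum.union_disjoint[OF _ _ disj]) (simp_all add: finite_Comp)
  also have "\<dots> = (\<Sum>c\<in>Comp k n. word (W a (1 # c))) + (\<Sum>c\<in>Comp k (Suc n). word (W a (?g c)))"
    by (simp add: sum.reindex inj)
  also have "\<dots> = z a * N a k n + Xa a * N a k (Suc n)"
    by (simp add: N_words W1 Wg sum_distrib_left cong: sum.cong)
  finally show ?thesis .
qed




definition cf :: "nat \<Rightarrow> nat \<Rightarrow> nat \<Rightarrow> rat poly" where
  "cf k n i = of_nat ((k - i) choose (n - i)) * tvar ^ (n - i)"

definition U :: "nat \<Rightarrow> nat \<Rightarrow> nat \<Rightarrow> ht" where
  "U a k n = (\<Sum>i = 1..n. Cs (cf k n i) * N a k i)"

lemma S_zero: "S 0 = 0" by (simp add: S_Lin Lin_0)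

lemma partA:
  assumes "1 \<le> m"
  shows "(\<Sum>i = 1..Suc m. Cs (cf (Suc k) (Suc m) i) * (z a * N a k (i - 1))) = z a * U a k m"
proof -
  have first: "Cs (cf (Suc k) (Suc m) 1) * (z a * N a k 0) = 0"
    using assms by (cases k; cases m) (simp_all add: N_zero cf_def)
  have "(\<Sum>i = 1..Suc m. Cs (cf (Suc k) (Suc m) i) * (z a * N a k (i - 1)))
      = Cs (cf (Suc k) (Suc m) 1) * (z a * N a k 0) + (\<Sum>i = Suc 1..Suc m. Cs (cf (Suc k) (Suc m) i) * (z a * N a k (i - 1)))"
    by (subst sum.atLeast_Suc_atMost) simp_all
  also have "\<dots> = (\<Sum>j = 1..m. Cs (cf (Suc k) (Suc m) (Suc j)) * (z a * N a k j))"
    by (simp only: first sum.shift_bounds_cl_Suc_ivl) simp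
  also have "\<dots> = (\<Sum>j = 1..m. Cs (cf k m j) * (z a * N a k j))"
    by (simp add: cf_def)
  also have "\<dots> = z a * U a k m"
    by (simp add: U_def sum_distrib_left Cs_left_comm)
  finally show ?thesis .
qed

lemma partB:
  "(\<Sum>i = 1..Suc m. Cs (cf (Suc k) (Suc m) i) * (Xa a * N a k i))
   = Xa a * U a k (Suc m) + Cs tvar * Xa a * U a k m"
proof -
  have trm: "Cs (cf (Suc k) (Suc m) i) * (Xa a * N a k i)
     = Cs (cf k (Suc m) i) * (Xa a * N a k i) + Cs (tvar * cf k m i) * (Xa a * N a k i)"
    if "i \<in> {1..m}" for i
  proof (cases "k < i")
    case True then show ?thesis by (simp add: N_small)
  next
    case False
    then have e1: "Suc k - i = Suc (k - i)" and e2: "Suc m - i = Suc (m - i)" using that by auto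
    have "cf (Suc k) (Suc m) i = cf k (Suc m) i + tvar * cf k m i"
      unfolding cf_def e1 e2 by (simp add: algebra_simps)
    then show ?thesis by (simp add: single_add distrib_right)
  qed
  have top1: "cf (Suc k) (Suc m) (Suc m) = 1" and top2: "cf k (Suc m) (Suc m) = 1"
    by (simp_all add: cf_def)
  have "(\<Sum>i = 1..Suc m. Cs (cf (Suc k) (Suc m) i) * (Xa a * N a k i))
     = (\<Sum>i = 1..m. Cs (cf (Suc k) (Suc m) i) * (Xa a * N a k i)) + Xa a * N a k (Suc m)"
    by (simp add: top1 Cs_one)
  also have "\<dots> = (\<Sum>i = 1..m. Cs (cf k (Suc m) i) * (Xa a * N a k i)) + (\<Sum>i = 1..m. Cs (tvar * cf k m i) * (Xa a * N a k i)) + Xa a * N a k (Suc m)"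
    by (simp add: trm sum.distrib)
  also have "\<dots> = (\<Sum>i = 1..Suc m. Cs (cf k (Suc m) i) * (Xa a * N a k i)) + (\<Sum>i = 1..m. Cs (tvar * cf k m i) * (Xa a * N a k i))"
    by (simp add: top2 Cs_one)
  also have "\<dots> = Xa a * U a k (Suc m) + Cs tvar * Xa a * U a k m"
  proof -
    have h1: "Xa a * U a k (Suc m) = (\<Sum>i = 1..Suc m. Cs (cf k (Suc m) i) * (Xa a * N a k i))"
      unfolding U_def sum_distrib_left by (simp only: Cs_left_comm)
    have tt: "Cs tvar * Xa a * (Cs c * f) = Cs (tvar * c) * (Xa a * f)" for c f
      by (metis Cs_left_comm Cs_mult mult.assoc)
    have h2: "Cs tvar * Xa a * U a k m = (\<Sum>i = 1..m. Cs (tvar * cf k m i) * (Xa a * N a k i))"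
      by (simp only: U_def sum_distrib_left tt)
    show ?thesis by (simp only: h1 h2)
  qed
  finally show ?thesis .
qed

lemma main:
  assumes a: "1 \<le> a"
  shows "1 \<le> n \<Longrightarrow> S (N a k n) = U a k n"
proof (induction k arbitrary: n)
  case 0
  then show ?case by (simp add: N_small S_zero U_def)
next
  case (Suc k)
  show ?case
  proof (cases "n = 1")
    case True
    have "N a (Suc k) 1 = z (a * Suc k)" by (rule N_one) simp
    then show ?thesis using True by (simp add: S_z U_def cf_def Cs_one)
  next
    case False
    then obtain m where n: "n = Suc m" and m: "1 \<le> m" using Suc.prems by (cases n) auto
    have za: "z a = word (replicate (a - 1) X @ [Y])" by (simp add: z_def)
    have "S (N a (Suc k) n) = S (z a * N a k m) + S (Xa a * N a k (Suc m))"
      by (simp add: n N_rec[OF a] S_Lin Lin_add)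
    also have "\<dots> = (Cs tvar * Xa a + z a) * U a k m + Xa a * U a k (Suc m)"
    proof -
      have "S (z a * N a k m) = sigma_word (replicate (a - 1) X @ [Y]) * S (N a k m)"
        unfolding za by (rule S_left[OF m])
      also have "\<dots> = (Cs tvar * Xa a + z a) * U a k m"
        by (simp only: sigma_z[OF a] Suc.IH[OF m])
      finally have s1: "S (z a * N a k m) = (Cs tvar * Xa a + z a) * U a k m" .
      have "S (Xa a * N a k (Suc m)) = sigma_word (replicate a X) * S (N a k (Suc m))"
        unfolding Xa_def by (rule S_left) simp
      also have "\<dots> = Xa a * U a k (Suc m)"
        using Suc.IH[of "Suc m"] by (simp only: sigma_word_repX Xa_def[symmetric])
      finally show ?thesis using s1 by simp
    qed
    also have "\<dots> = U a (Suc k) n"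
    proof -
      have "U a (Suc k) n = (\<Sum>i = 1..Suc m. Cs (cf (Suc k) (Suc m) i) * (z a * N a k (i - 1)))
          + (\<Sum>i = 1..Suc m. Cs (cf (Suc k) (Suc m) i) * (Xa a * N a k i))"
        unfolding U_def n sum.distrib[symmetric]
        by (rule sum.cong) (auto simp: N_rec[OF a] distrib_left dest!: Suc_le_D)
      then show ?thesis by (simp only: partA[OF m] partB) (simp add: distrib_right add_ac)
    qed
    finally show ?thesis .
  qed
qed


theorem proposition4p10:
  fixes a k n :: nat
  assumes "0 < a" and "1 \<le> n" and "n \<le> k"
  shows "S (N a k n) =
    (\<Sum>i = 1..n. hscale (of_nat ((k - i) choose (k - n)) * tvar ^ (n - i)) (N a k i))"
proof -
  have a: "1 \<le> a" using assms(1) by simp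
  have "S (N a k n) = U a k n" by (rule main[OF a assms(2)])
  also have "\<dots> = (\<Sum>i = 1..n. hscale (of_nat ((k - i) choose (k - n)) * tvar ^ (n - i)) (N a k i))"
    unfolding U_def hscale_eq
  proof (rule sum.cong[OF refl])
    fix i assume i: "i \<in> {1..n}"
    have "(k - i) choose (n - i) = (k - i) choose ((k - i) - (n - i))"
      by (rule binomial_symmetric) (use i assms in auto)
    also have "(k - i) - (n - i) = k - n" using i assms by auto
    finally show "Cs (cf k n i) * N a k i = Cs (of_nat ((k - i) choose (k - n)) * tvar ^ (n - i)) * N a k i"
      by (simp add: cf_def)
  qed
  finally show ?thesis .
qed

end
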